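(* Assume that $k\mapsto\widehat{\mathit{RID}}_j(k;\varepsilon,\mathcal{F},\ell,\mathcal{P}_n,\lambda)$ and $k\mapsto\mathit{RID}_j(k;\varepsilon,\mathcal{F},\ell,\mathcal{P}_n,\lambda)$ are strictly increasing in $k\in[\phi_{\min},\phi_{\max}]$. Then, as the number $B$ of bootstrap samples tends to infinity, the interquartile range of $\widehat{\mathit{RID}}_j$ converges in probability to the interquartile range of $\mathit{RID}_j$.
   Context: Let $\mathcal{D}^{(n)}=\{(X_i,Y_i)\}_{i=1}^n$ be an observed dataset with $X_i\in\mathbb{R}^p$, $Y_i\in\mathbb{R}$, and $\mathcal{P}_n$ its empirical distribution; a bootstrap dataset $\mathcal{D}^{(n)}_b\sim\mathcal{P}_n$ consists of $n$ i.i.d. draws from $\mathcal{P}_n$. Let $\mathcal{F}$ be a model class (for a finite class $|\cdot|$ denotes cardinality; for a continuous class, volume under a measure on the class), $\ell(f,\mathcal{D};\lambda)$ a bounded loss with hyperparameters $\lambda$, $\varepsilon>0$, and $\phi_j(f,\mathcal{D})\in[\phi_{\min},\phi_{\max}]$ a bounded variable importance measure for variable $j$. The Rashomon set is $\mathcal{R}^{\varepsilon}_{\mathcal{D}}=\{f\in\mathcal{F}:\ell(f,\mathcal{D};\lambda)\le\min_{f'\in\mathcal{F}}\ell(f',\mathcal{D};\lambda)+\varepsilon\}$. Define $\mathit{RID}_j(k;\varepsilon,\mathcal{F},\ell,\mathcal{P}_n,\lambda)=\mathbb{E}_{\mathcal{D}^{(n)}_b\sim\mathcal{P}_n}\left[\frac{|\{f\in\mathcal{R}^{\varepsilon}_{\mathcal{D}^{(n)}_b}:\phi_j(f,\mathcal{D}^{(n)}_b)\le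 k\}|}{|\mathcal{R}^{\varepsilon}_{\mathcal{D}^{(n)}_b}|}\right]$ and, for $B$ i.i.d. bootstrap datasets $\mathcal{D}^{(n)}_1,\dots,\mathcal{D}^{(n)}_B\sim\mathcal{P}_n$, $\widehat{\mathit{RID}}_j(k;\varepsilon,\mathcal{F},\ell,\mathcal{P}_n,\lambda)=\frac1B\sum_{b=1}^B\frac{|\{f\in\mathcal{R}^{\varepsilon}_{\mathcal{D}^{(n)}_b}:\phi_j(f,\mathcal{D}^{(n)}_b)\le k\}|}{|\mathcal{R}^{\varepsilon}_{\mathcal{D}^{(n)}_b}|}$. For a strictly increasing CDF $G$ on $[\phi_{\min},\phi_{\max}]$, its interquartile range is determined by the quartiles $k_{0.25},k_{0.75}$ with $G(k_{0.25})=0.25$, $G(k_{0.75})=0.75$, i.e. it is $[k_{0.25},k_{0.75}]$. *)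

theory Defs
  imports "HOL-Analysis.Analysis" "HOL-Probability.Probability"
begin

text \<open>A data point (X_i, Y_i) with X_i in R^p (p given by the finite index type 'p),
  Y_i real; a dataset is a finite list of data points.\<close>
type_synonym 'p dataset = "((real ^ 'p) \<times> real) list"

text \<open>Bootstrap distribution: n i.i.d. draws from the empirical distribution P_n of D,
  realised as n i.i.d. uniform indices into D.\<close>
definition bootstrap_pmf :: "'p dataset \<Rightarrow> 'p dataset pmf" where
  "bootstrap_pmf D =
     map_pmf (\<lambda>is. map (\<lambda>i. D ! i) is) (replicate_pmf (length D) (pmf_of_set {..<length D}))"

definition bootstrap_samples :: "'p dataset \<Rightarrow> nat \<Rightarrow> 'p dataset list pmf" where
  "bootstrap_samples D B = replicate_pmf B (bootstrap_pmf D)"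

definition rashomon ::
  "'f set \<Rightarrow> ('f \<Rightarrow> 'p dataset \<Rightarrow> 'l \<Rightarrow> real) \<Rightarrow> 'l \<Rightarrow> real \<Rightarrow> 'p dataset \<Rightarrow> 'f set" where
  "rashomon F L lam \<epsilon> d = {f \<in> F. L f d lam \<le> (INF f'\<in>F. L f' d lam) + \<epsilon>}"

text \<open>Proportion (w.r.t. the measure \<mu> on the model class; counting measure for a finite
  class) of the Rashomon set on dataset d whose importance for variable j is at most k.\<close>
definition rid_frac ::
  "'f measure \<Rightarrow> 'f set \<Rightarrow> ('f \<Rightarrow> 'p dataset \<Rightarrow> 'l \<Rightarrow> real) \<Rightarrow> 'l \<Rightarrow> real
   \<Rightarrow> (nat \<Rightarrow> 'f \<Rightarrow> 'p dataset \<Rightarrow> real) \<Rightarrow> nat \<Rightarrow> real \<Rightarrow> 'p dataset \<Rightarrow> real" where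
  "rid_frac \<mu> F L lam \<epsilon> \<phi> j k d =
     measure \<mu> {f \<in> rashomon F L lam \<epsilon> d. \<phi> j f d \<le> k} / measure \<mu> (rashomon F L lam \<epsilon> d)"

definition RID ::
  "'f measure \<Rightarrow> 'f set \<Rightarrow> ('f \<Rightarrow> 'p dataset \<Rightarrow> 'l \<Rightarrow> real) \<Rightarrow> 'l \<Rightarrow> real
   \<Rightarrow> (nat \<Rightarrow> 'f \<Rightarrow> 'p dataset \<Rightarrow> real) \<Rightarrow> nat \<Rightarrow> 'p dataset \<Rightarrow> real \<Rightarrow> real" where
  "RID \<mu> F L lam \<epsilon> \<phi> j D k =
     measure_pmf.expectation (bootstrap_pmf D) (\<lambda>d. rid_frac \<mu> F L lam \<epsilon> \<phi> j k d)"

definition RID_hat ::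
  "'f measure \<Rightarrow> 'f set \<Rightarrow> ('f \<Rightarrow> 'p dataset \<Rightarrow> 'l \<Rightarrow> real) \<Rightarrow> 'l \<Rightarrow> real
   \<Rightarrow> (nat \<Rightarrow> 'f \<Rightarrow> 'p dataset \<Rightarrow> real) \<Rightarrow> nat \<Rightarrow> 'p dataset list \<Rightarrow> real \<Rightarrow> real" where
  "RID_hat \<mu> F L lam \<epsilon> \<phi> j ds k =
     sum_list (map (\<lambda>d. rid_frac \<mu> F L lam \<epsilon> \<phi> j k d) ds) / real (length ds)"

text \<open>q-quantile of a CDF G on [lo, hi]: the (generalised-inverse) point where G reaches q.
  For strictly increasing G with G(k) = q solvable, this is the unique k with G(k) = q.\<close>
definition quantile_on :: "(real \<Rightarrow> real) \<Rightarrow> real \<Rightarrow> real \<Rightarrow> real \<Rightarrow> real" where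
  "quantile_on G lo hi q = Inf {k \<in> {lo..hi}. q \<le> G k}"

end

theory Submission
  imports Defs
begin


lemma exp_bind_univ:
  fixes f :: "'b \<Rightarrow> real"
  assumes bnd: "\<And>y. \<bar>f y\<bar> \<le> c"
  shows "measure_pmf.expectation (bind_pmf M N) f
       = measure_pmf.expectation M (\<lambda>x. measure_pmf.expectation (N x) f)"
proof -
  have c0: "0 \<le> c" using bnd[of undefined] by linarith
  define g where "g y = f y + c" for y
  have g0: "0 \<le> g y" and g2: "g y \<le> 2*c" for y using bnd[of y] by (auto simp: g_def)
  have intf: "integrable (measure_pmf P) f" for P
    by (rule measure_pmf.integrable_const_bound[where B=c]) (use bnd in auto)
  have intg: "integrable (measure_pmf P) g" for P
    by (rule measure_pmf.integrable_const_bound[where B="2*c"]) (use g0 g2 in auto)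
  have Eg: "measure_pmf.expectation P g = measure_pmf.expectation P f + c" for P
    unfolding g_def using intf[of P] by (simp add: Bochner_Integration.integral_add)
  have nng: "(\<integral>\<^sup>+y. ennreal (g y) \<partial>measure_pmf P) = ennreal (measure_pmf.expectation P g)" for P
    by (rule nn_integral_eq_integral[OF intg]) (use g0 in auto)
  have inner0: "0 \<le> measure_pmf.expectation (N x) g" for x
    by (rule integral_nonneg_AE) (use g0 in auto)
  have inner2: "measure_pmf.expectation (N x) g \<le> 2*c" for x
    by (rule measure_pmf.integral_le_const[OF intg]) (use g2 in auto)
  have intin: "integrable (measure_pmf M) (\<lambda>x. measure_pmf.expectation (N x) g)"
    by (rule measure_pmf.integrable_const_bound[where B="2*c"]) (use inner0 inner2 in auto)
  have "ennreal (measure_pmf.expectation (bind_pmf M N) g)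
      = (\<integral>\<^sup>+x. ennreal (measure_pmf.expectation (N x) g) \<partial>measure_pmf M)"
    by (simp add: nng[symmetric])
  also have "\<dots> = ennreal (measure_pmf.expectation M (\<lambda>x. measure_pmf.expectation (N x) g))"
    by (rule nn_integral_eq_integral[OF intin]) (use inner0 in auto)
  finally have "measure_pmf.expectation (bind_pmf M N) g
      = measure_pmf.expectation M (\<lambda>x. measure_pmf.expectation (N x) g)"
    by (subst (asm) ennreal_inj) (auto intro!: integral_nonneg_AE simp: g0 inner0)
  then have "measure_pmf.expectation (bind_pmf M N) f + c
      = measure_pmf.expectation M (\<lambda>x. measure_pmf.expectation (N x) f + c)"
    by (simp add: Eg)
  moreover have "integrable (measure_pmf M) (\<lambda>x. measure_pmf.expectation (N x) f)"
  proof -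
    have "(\<lambda>x. measure_pmf.expectation (N x) f) = (\<lambda>x. measure_pmf.expectation (N x) g - c)"
      by (simp add: Eg)
    then show ?thesis using intin by simp
  qed
  ultimately show ?thesis by (simp add: Bochner_Integration.integral_add)
qed

lemma integrable_supp:
  fixes f :: "'b \<Rightarrow> real"
  assumes "\<forall>y\<in>set_pmf P. \<bar>f y\<bar> \<le> c"
  shows "integrable (measure_pmf P) f"
  by (rule measure_pmf.integrable_const_bound[where B=c]) (use assms in \<open>auto simp: AE_measure_pmf_iff\<close>)

lemma exp_cong_supp:
  fixes f g :: "'b \<Rightarrow> real"
  assumes "\<forall>y\<in>set_pmf P. f y = g y"
  shows "measure_pmf.expectation P f = measure_pmf.expectation P g"
  by (rule integral_cong_AE) (use assms in \<open>auto simp: AE_measure_pmf_iff\<close>)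

lemma exp_bind_supp:
  fixes f :: "'b \<Rightarrow> real"
  assumes bnd: "\<forall>y\<in>set_pmf (bind_pmf M N). \<bar>f y\<bar> \<le> c"
  shows "measure_pmf.expectation (bind_pmf M N) f
       = measure_pmf.expectation M (\<lambda>x. measure_pmf.expectation (N x) f)"
proof -
  define f' where "f' y = max (-c) (min c (f y))" for y
  obtain y0 where "y0 \<in> set_pmf (bind_pmf M N)" using set_pmf_not_empty[of "bind_pmf M N"] by (metis ex_in_conv)
  then have c0: "0 \<le> c" using bnd by force
  have b': "\<And>y. \<bar>f' y\<bar> \<le> c" using c0 by (auto simp: f'_def)
  have e1: "measure_pmf.expectation (bind_pmf M N) f = measure_pmf.expectation (bind_pmf M N) f'"
    by (rule exp_cong_supp) (use bnd in \<open>force simp: f'_def abs_le_iff\<close>)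
  have e2: "measure_pmf.expectation M (\<lambda>x. measure_pmf.expectation (N x) f)
          = measure_pmf.expectation M (\<lambda>x. measure_pmf.expectation (N x) f')"
  proof (rule exp_cong_supp, intro ballI)
    fix x assume x: "x \<in> set_pmf M"
    show "measure_pmf.expectation (N x) f = measure_pmf.expectation (N x) f'"
      by (rule exp_cong_supp) (use bnd x in \<open>force simp: f'_def abs_le_iff\<close>)
  qed
  show ?thesis using e1 e2 exp_bind_univ[OF b'] by simp
qed

lemma sum_list_bound:
  fixes g :: "'a \<Rightarrow> real"
  assumes "\<And>x. \<bar>g x\<bar> \<le> c"
  shows "\<bar>sum_list (map g ys)\<bar> \<le> real (length ys) * c"
proof (induction ys)
  case Nil then show ?case by simp
next
  case (Cons a ys)
  have "\<bar>g a + sum_list (map g ys)\<bar> \<le> \<bar>g a\<bar> + \<bar>sum_list (map g ys)\<bar>" by (rule abs_triangle_ineq)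
  then show ?case using Cons assms[of a] by (simp add: algebra_simps)
qed

lemma exp_rep_suc:
  fixes F :: "'a list \<Rightarrow> real"
  assumes bnd: "\<forall>ys\<in>set_pmf (replicate_pmf (Suc n) p). \<bar>F ys\<bar> \<le> c"
  shows "measure_pmf.expectation (replicate_pmf (Suc n) p) F
       = measure_pmf.expectation p (\<lambda>x. measure_pmf.expectation (replicate_pmf n p) (\<lambda>xs. F (x#xs)))"
proof -
  have r: "replicate_pmf (Suc n) p = bind_pmf p (\<lambda>x. bind_pmf (replicate_pmf n p) (\<lambda>xs. return_pmf (x#xs)))"
    by simp
  have "measure_pmf.expectation (replicate_pmf (Suc n) p) F
     = measure_pmf.expectation p (\<lambda>x. measure_pmf.expectation (bind_pmf (replicate_pmf n p) (\<lambda>xs. return_pmf (x#xs))) F)"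
    using bnd unfolding r by (rule exp_bind_supp)
  also have "\<dots> = measure_pmf.expectation p (\<lambda>x. measure_pmf.expectation (replicate_pmf n p) (\<lambda>xs. F (x#xs)))"
  proof (rule exp_cong_supp, intro ballI)
    fix x assume x: "x \<in> set_pmf p"
    have "measure_pmf.expectation (bind_pmf (replicate_pmf n p) (\<lambda>xs. return_pmf (x#xs))) F
       = measure_pmf.expectation (replicate_pmf n p) (\<lambda>xs. measure_pmf.expectation (return_pmf (x#xs)) F)"
      by (rule exp_bind_supp[where c=c]) (use bnd x in \<open>auto simp: set_replicate_pmf\<close>)
    then show "measure_pmf.expectation (bind_pmf (replicate_pmf n p) (\<lambda>xs. return_pmf (x#xs))) F
       = measure_pmf.expectation (replicate_pmf n p) (\<lambda>xs. F (x#xs))" by simp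
  qed
  finally show ?thesis .
qed

lemma moments:
  fixes g :: "'a \<Rightarrow> real"
  assumes bnd: "\<And>x. \<bar>g x\<bar> \<le> c" and m0: "measure_pmf.expectation p g = 0"
  shows "measure_pmf.expectation (replicate_pmf n p) (\<lambda>xs. sum_list (map g xs)) = 0
       \<and> measure_pmf.expectation (replicate_pmf n p) (\<lambda>xs. (sum_list (map g xs))^2)
          = real n * measure_pmf.expectation p (\<lambda>x. (g x)^2)"
proof (induction n)
  case 0 then show ?case by simp
next
  case (Suc n)
  define S where "S = (\<lambda>xs. sum_list (map g xs))"
  have Sb: "\<bar>S ys\<bar> \<le> real (length ys) * c" for ys unfolding S_def by (rule sum_list_bound[OF bnd])
  have len: "ys \<in> set_pmf (replicate_pmf k p) \<Longrightarrow> length ys = k" for ys k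
    by (simp add: set_replicate_pmf)
  have S2b: "\<bar>(S ys)^2\<bar> \<le> (real (length ys) * c)^2" for ys
    using power_mono[OF Sb[of ys] abs_ge_zero, of 2] by simp
  have intS: "integrable (measure_pmf (replicate_pmf k p)) S" for k
    by (rule integrable_supp[where c="real k * c"]) (use Sb len in auto)
  have intS2: "integrable (measure_pmf (replicate_pmf k p)) (\<lambda>ys. (S ys)^2)" for k
    by (rule integrable_supp[where c="(real k * c)^2"]) (use S2b len in auto)
  have intg: "integrable (measure_pmf p) g"
    by (rule integrable_supp[where c=c]) (use bnd in auto)
  have intg2: "integrable (measure_pmf p) (\<lambda>x. (g x)^2)"
    by (rule integrable_supp[where c="c^2"]) (use bnd in \<open>auto intro: power_mono[OF bnd abs_ge_zero, of _ 2, simplified]\<close>)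
  have IH1: "measure_pmf.expectation (replicate_pmf n p) S = 0" using Suc by (simp add: S_def)
  have IH2: "measure_pmf.expectation (replicate_pmf n p) (\<lambda>xs. (S xs)^2) = real n * measure_pmf.expectation p (\<lambda>x. (g x)^2)"
    using Suc by (simp add: S_def)
  have e1: "measure_pmf.expectation (replicate_pmf (Suc n) p) S
     = measure_pmf.expectation p (\<lambda>x. measure_pmf.expectation (replicate_pmf n p) (\<lambda>xs. S (x#xs)))"
    by (rule exp_rep_suc[where c="real (Suc n) * c"]) (metis Sb len)
  also have "\<dots> = measure_pmf.expectation p (\<lambda>x. g x + measure_pmf.expectation (replicate_pmf n p) S)"
    by (simp add: S_def Bochner_Integration.integral_add intS[unfolded S_def])
  also have "\<dots> = 0" using IH1 m0 by simp
  finally have r1: "measure_pmf.expectation (replicate_pmf (Suc n) p) S = 0" .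
  have "measure_pmf.expectation (replicate_pmf (Suc n) p) (\<lambda>xs. (S xs)^2)
     = measure_pmf.expectation p (\<lambda>x. measure_pmf.expectation (replicate_pmf n p) (\<lambda>xs. (S (x#xs))^2))"
    by (rule exp_rep_suc[where c="(real (Suc n) * c)^2"]) (metis S2b len)
  also have "\<dots> = measure_pmf.expectation p (\<lambda>x. (g x)^2 + 2 * g x * measure_pmf.expectation (replicate_pmf n p) S
          + measure_pmf.expectation (replicate_pmf n p) (\<lambda>xs. (S xs)^2))"
  proof -
    have "(\<lambda>xs. (S (x#xs))^2) = (\<lambda>xs. (g x)^2 + (2 * g x) * S xs + (S xs)^2)" for x
      by (simp add: S_def power2_eq_square algebra_simps)
    then show ?thesis using intS intS2
      by (simp add: Bochner_Integration.integral_add)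
  qed
  also have "\<dots> = measure_pmf.expectation p (\<lambda>x. (g x)^2) + real n * measure_pmf.expectation p (\<lambda>x. (g x)^2)"
    using IH1 IH2 intg2 by (simp add: Bochner_Integration.integral_add)
  finally show ?case using r1 by (simp add: S_def algebra_simps)
qed



lemma prob_mono_supp:
  assumes "A \<inter> set_pmf P \<subseteq> B"
  shows "measure_pmf.prob P A \<le> measure_pmf.prob P B"
proof -
  have "measure_pmf.prob P A = measure_pmf.prob P (A \<inter> set_pmf P)" by (simp add: measure_Int_set_pmf)
  also have "\<dots> \<le> measure_pmf.prob P B" by (rule measure_pmf.finite_measure_mono) (use assms in auto)
  finally show ?thesis .
qed

lemma lln:
  fixes h :: "'a \<Rightarrow> real"
  assumes hb: "\<And>x. \<bar>h x\<bar> \<le> 1" and t: "t > 0"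
  shows "(\<lambda>B. measure_pmf.prob (replicate_pmf B p)
      {ds. t \<le> \<bar>sum_list (map h ds) / real (length ds) - measure_pmf.expectation p h\<bar>}) \<longlonglongrightarrow> 0"
proof -
  define m where "m = measure_pmf.expectation p h"
  define g where "g x = h x - m" for x
  have inth: "integrable (measure_pmf p) h" by (rule integrable_supp[where c=1]) (use hb in auto)
  have mb: "\<bar>m\<bar> \<le> 1" unfolding m_def
    using measure_pmf.integral_le_const[OF inth, of 1] measure_pmf.integral_ge_const[OF inth, of "-1"] hb
    by (smt (verit, best) AE_I2 abs_le_iff)
  have gb: "\<bar>g x\<bar> \<le> 2" for x using hb[of x] mb by (simp add: g_def)
  have g0: "measure_pmf.expectation p g = 0" unfolding g_def m_def using inth by simp
  define v where "v = measure_pmf.expectation p (\<lambda>x. (g x)^2)"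
  have mom: "measure_pmf.expectation (replicate_pmf B p) (\<lambda>xs. (sum_list (map g xs))^2) = real B * v" for B
    using moments[OF gb g0, of B] by (simp add: v_def)
  have bound: "measure_pmf.prob (replicate_pmf B p)
      {ds. t \<le> \<bar>sum_list (map h ds) / real (length ds) - m\<bar>} \<le> v / (t^2 * real B)" if B: "B > 0" for B
  proof -
    let ?P = "replicate_pmf B p"
    let ?u = "\<lambda>xs. (sum_list (map g xs))^2"
    have sub: "{ds. t \<le> \<bar>sum_list (map h ds) / real (length ds) - m\<bar>} \<inter> set_pmf ?P
          \<subseteq> {x \<in> space (measure_pmf ?P). ?u x \<ge> (t * real B)^2}"
    proof
      fix ds assume "ds \<in> {ds. t \<le> \<bar>sum_list (map h ds) / real (length ds) - m\<bar>} \<inter> set_pmf ?P"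
      then have le: "t \<le> \<bar>sum_list (map h ds) / real (length ds) - m\<bar>" and len: "length ds = B"
        by (auto simp: set_replicate_pmf)
      have "sum_list (map g ds) = sum_list (map h ds) - real B * m"
        unfolding g_def by (simp add: sum_list_subtractf len sum_list_triv)
      then have eq: "sum_list (map h ds) / real (length ds) - m = sum_list (map g ds) / real B"
        using B len by (simp add: field_simps)
      have "t * real B \<le> \<bar>sum_list (map g ds)\<bar>" using le B by (simp add: eq field_simps)
      then have "(t * real B)^2 \<le> (\<bar>sum_list (map g ds)\<bar>)^2"
        by (rule power_mono) (use t in simp)
      then show "ds \<in> {x \<in> space (measure_pmf ?P). ?u x \<ge> (t * real B)^2}" by simp
    qed
    have ub: "\<bar>?u xs\<bar> \<le> (real (length xs) * 2)^2" for xs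
      using power_mono[OF sum_list_bound[OF gb, where ys=xs] abs_ge_zero, where n=2] by simp
    have intu: "integrable (measure_pmf ?P) ?u"
      by (rule integrable_supp[where c="(real B * 2)^2"])
         (use ub in \<open>auto simp: set_replicate_pmf\<close>)
    have "measure_pmf.prob ?P {ds. t \<le> \<bar>sum_list (map h ds) / real (length ds) - m\<bar>}
        \<le> measure_pmf.prob ?P {x \<in> space (measure_pmf ?P). ?u x \<ge> (t * real B)^2}"
      by (rule prob_mono_supp[OF sub])
    also have "\<dots> \<le> measure_pmf.expectation ?P ?u / (t * real B)^2"
      by (rule integral_Markov_inequality_measure[OF intu, where A=UNIV]) (use t B in auto)
    also have "\<dots> = v / (t^2 * real B)" using B t by (simp only: mom) (simp add: power2_eq_square field_simps)
    finally show ?thesis .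
  qed
  have lim: "(\<lambda>B. v / (t^2 * real B)) \<longlonglongrightarrow> 0"
    using tendsto_mult_left_zero[OF lim_inverse_n', of "v / t^2"] by (simp add: field_simps)
  show ?thesis unfolding m_def[symmetric]
    by (rule tendsto_sandwich[OF _ _ tendsto_const lim])
       (use bound in \<open>auto intro!: eventually_sequentiallyI[of 1]\<close>)
qed



lemma quant_props:
  fixes G :: "real \<Rightarrow> real"
  assumes lohi: "lo \<le> hi" and sm: "strict_mono_on {lo..hi} G" and qh: "q \<le> G hi"
  defines "k \<equiv> quantile_on G lo hi q"
  shows "lo \<le> k" "k \<le> hi"
    "\<And>x. x \<in> {lo..hi} \<Longrightarrow> x < k \<Longrightarrow> G x < q"
    "\<And>x. x \<in> {lo..hi} \<Longrightarrow> k < x \<Longrightarrow> q < G x"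
proof -
  let ?S = "{k \<in> {lo..hi}. q \<le> G k}"
  have hiS: "hi \<in> ?S" using lohi qh by auto
  have ne: "?S \<noteq> {}" using hiS by blast
  have bdd: "bdd_below ?S" by (rule bdd_belowI[of _ lo]) auto
  have kdef: "k = Inf ?S" by (simp add: k_def quantile_on_def)
  show "lo \<le> k" unfolding kdef by (rule cInf_greatest[OF ne]) auto
  show "k \<le> hi" unfolding kdef by (rule cInf_lower[OF hiS bdd])
  show "G x < q" if "x \<in> {lo..hi}" "x < k" for x
  proof (rule ccontr)
    assume "\<not> G x < q"
    then have "x \<in> ?S" using that by auto
    then have "k \<le> x" unfolding kdef by (rule cInf_lower[OF _ bdd])
    then show False using that by simp
  qed
  show "q < G x" if x: "x \<in> {lo..hi}" "k < x" for x
  proof -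
    obtain s where s: "s \<in> ?S" "s < x" using x(2) unfolding kdef using cInf_less_iff[OF ne bdd] by blast
    have "G s < G x" using sm s x by (auto intro: strict_mono_onD)
    then show ?thesis using s by auto
  qed
qed

lemma one_q:
  fixes G :: "real \<Rightarrow> real" and Gh :: "'b \<Rightarrow> real \<Rightarrow> real" and P :: "nat \<Rightarrow> 'b pmf"
  assumes lohi: "lo \<le> hi" and sm: "strict_mono_on {lo..hi} G" and qh: "q \<le> G hi"
    and smh: "\<forall>B>0. \<forall>ds\<in>set_pmf (P B). strict_mono_on {lo..hi} (Gh ds) \<and> q \<le> Gh ds hi"
    and conv: "\<And>x t. t > 0 \<Longrightarrow> (\<lambda>B. measure_pmf.prob (P B) {ds. t \<le> \<bar>Gh ds x - G x\<bar>}) \<longlonglongrightarrow> 0"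
    and d: "\<delta> > 0"
  shows "(\<lambda>B. measure_pmf.prob (P B) {ds. \<delta> < \<bar>quantile_on (Gh ds) lo hi q - quantile_on G lo hi q\<bar>}) \<longlonglongrightarrow> 0"
proof -
  define k where "k = quantile_on G lo hi q"
  note kp = quant_props[OF lohi sm qh, folded k_def]
  define x1 where "x1 = k + \<delta>"
  define x2 where "x2 = k - \<delta>"
  define A1 where "A1 = (\<lambda>B. if x1 \<le> hi then measure_pmf.prob (P B) {ds. G x1 - q \<le> \<bar>Gh ds x1 - G x1\<bar>} else 0)"
  define A2 where "A2 = (\<lambda>B. if lo \<le> x2 then measure_pmf.prob (P B) {ds. q - G x2 \<le> \<bar>Gh ds x2 - G x2\<bar>} else 0)"
  have A1l: "A1 \<longlonglongrightarrow> 0"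
  proof (cases "x1 \<le> hi")
    case True
    have "q < G x1" using kp(4)[of x1] True kp(1) d by (auto simp: x1_def)
    then show ?thesis using conv[of "G x1 - q" x1] True by (simp add: A1_def)
  qed (simp add: A1_def)
  have A2l: "A2 \<longlonglongrightarrow> 0"
  proof (cases "lo \<le> x2")
    case True
    have "G x2 < q" using kp(3)[of x2] True kp(2) d by (auto simp: x2_def)
    then show ?thesis using conv[of "q - G x2" x2] True by (simp add: A2_def)
  qed (simp add: A2_def)
  have bound: "measure_pmf.prob (P B) {ds. \<delta> < \<bar>quantile_on (Gh ds) lo hi q - k\<bar>} \<le> A1 B + A2 B"
    if B: "B > 0" for B
  proof -
    let ?E1 = "if x1 \<le> hi then {ds. G x1 - q \<le> \<bar>Gh ds x1 - G x1\<bar>} else {}"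
    let ?E2 = "if lo \<le> x2 then {ds. q - G x2 \<le> \<bar>Gh ds x2 - G x2\<bar>} else {}"
    have sub: "{ds. \<delta> < \<bar>quantile_on (Gh ds) lo hi q - k\<bar>} \<inter> set_pmf (P B) \<subseteq> ?E1 \<union> ?E2"
    proof
      fix ds assume ds: "ds \<in> {ds. \<delta> < \<bar>quantile_on (Gh ds) lo hi q - k\<bar>} \<inter> set_pmf (P B)"
      define Q where "Q = quantile_on (Gh ds) lo hi q"
      have smd: "strict_mono_on {lo..hi} (Gh ds)" and qd: "q \<le> Gh ds hi" using smh B ds by auto
      note Qp = quant_props[OF lohi smd qd, folded Q_def]
      have "\<delta> < \<bar>Q - k\<bar>" using ds by (simp add: Q_def)
      then consider "x1 < Q" | "Q < x2" unfolding x1_def x2_def by (cases "k \<le> Q") auto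
      then show "ds \<in> ?E1 \<union> ?E2"
      proof cases
        case 1
        have x1r: "x1 \<in> {lo..hi}" using 1 Qp(2) kp(1) d by (auto simp: x1_def)
        have "Gh ds x1 < q" using Qp(3)[OF x1r 1] .
        moreover have "q < G x1" using kp(4)[OF x1r] d by (simp add: x1_def)
        ultimately show ?thesis using x1r by auto
      next
        case 2
        have x2r: "x2 \<in> {lo..hi}" using 2 Qp(1) kp(2) d by (auto simp: x2_def)
        have "q < Gh ds x2" using Qp(4)[OF x2r 2] .
        moreover have "G x2 < q" using kp(3)[OF x2r] d by (simp add: x2_def)
        ultimately show ?thesis using x2r by auto
      qed
    qed
    have "measure_pmf.prob (P B) {ds. \<delta> < \<bar>quantile_on (Gh ds) lo hi q - k\<bar>} \<le> measure_pmf.prob (P B) (?E1 \<union> ?E2)"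
      by (rule prob_mono_supp[OF sub])
    also have "\<dots> \<le> measure_pmf.prob (P B) ?E1 + measure_pmf.prob (P B) ?E2"
      by (rule measure_subadditive) auto
    also have "\<dots> = A1 B + A2 B" by (simp add: A1_def A2_def)
    finally show ?thesis .
  qed
  show ?thesis unfolding k_def[symmetric]
    by (rule tendsto_sandwich[OF _ _ tendsto_const, where h="\<lambda>B. A1 B + A2 B"])
       (use bound in \<open>auto intro!: eventually_sequentiallyI[of 1] tendsto_add_zero A1l A2l\<close>)
qed



lemma frac_aux:
  fixes a b :: real
  assumes "0 \<le> a" "0 \<le> b" "b \<le> a \<or> a = 0"
  shows "\<bar>b / a\<bar> \<le> 1"
  using assms by (cases "a = 0") (auto simp: divide_le_eq_1)

lemma rid_frac_bound:
  "\<bar>rid_frac \<mu> F L lam \<epsilon> \<phi> j k d\<bar> \<le> 1"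
proof -
  let ?R = "rashomon F L lam \<epsilon> d"
  let ?N = "{f \<in> ?R. \<phi> j f d \<le> k}"
  have "measure \<mu> ?N \<le> measure \<mu> ?R \<or> measure \<mu> ?R = 0"
  proof (cases "?R \<in> sets \<mu> \<and> emeasure \<mu> ?R < \<infinity> \<and> ?N \<in> sets \<mu>")
    case True
    then have "?R \<in> fmeasurable \<mu>" by (auto simp: fmeasurable_def)
    then show ?thesis using True by (auto intro!: measure_mono_fmeasurable)
  next
    case False
    show ?thesis
    proof (cases "?R \<in> sets \<mu>")
      case False then show ?thesis by (simp add: measure_notin_sets)
    next
      case Rs: True
      show ?thesis
      proof (cases "emeasure \<mu> ?R < \<infinity>")
        case False
        then have "emeasure \<mu> ?R = \<top>" by (metis infinity_ennreal_def less_top)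
        then have "measure \<mu> ?R = 0" by (simp add: measure_def)
        then show ?thesis by simp
      next
        case True
        then have "?N \<notin> sets \<mu>" using False Rs by simp
        then have "measure \<mu> ?N = 0" by (rule measure_notin_sets)
        then show ?thesis by simp
      qed
    qed
  qed
  moreover have "0 \<le> measure \<mu> ?R" "0 \<le> measure \<mu> ?N" by (rule measure_nonneg)+
  ultimately show ?thesis unfolding rid_frac_def
    by (intro frac_aux) auto
qed

theorem mainTheorem5:
  fixes D :: "'p dataset"
    and \<mu> :: "'f measure" and F :: "'f set"
    and L :: "'f \<Rightarrow> 'p dataset \<Rightarrow> 'l \<Rightarrow> real" and lam :: 'l
    and \<epsilon> :: real
    and \<phi> :: "nat \<Rightarrow> 'f \<Rightarrow> 'p dataset \<Rightarrow> real" and j :: nat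
    and \<phi>min \<phi>max :: real
  assumes n_pos: "length D > 0"
    and eps_pos: "\<epsilon> > 0"
    and F_ne: "F \<noteq> {}"
    and loss_bounded: "\<exists>M. \<forall>f\<in>F. \<forall>d. \<bar>L f d lam\<bar> \<le> M"
    and phi_bounded: "\<forall>f\<in>F. \<forall>d. \<phi>min \<le> \<phi> j f d \<and> \<phi> j f d \<le> \<phi>max"
    and F_meas: "F \<subseteq> space \<mu>"
    and R_meas: "\<forall>d \<in> set_pmf (bootstrap_pmf D).
                   rashomon F L lam \<epsilon> d \<in> sets \<mu>
                 \<and> 0 < emeasure \<mu> (rashomon F L lam \<epsilon> d)
                 \<and> emeasure \<mu> (rashomon F L lam \<epsilon> d) < \<infinity>
                 \<and> (\<forall>k. {f \<in> rashomon F L lam \<epsilon> d. \<phi> j f d \<le> k} \<in> sets \<mu>)"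
    and RID_strict: "strict_mono_on {\<phi>min..\<phi>max} (RID \<mu> F L lam \<epsilon> \<phi> j D)"
    and RID_hat_strict: "\<forall>B>0. \<forall>ds \<in> set_pmf (bootstrap_samples D B).
                 strict_mono_on {\<phi>min..\<phi>max} (RID_hat \<mu> F L lam \<epsilon> \<phi> j ds)"
  shows "\<forall>\<delta>>0. ((\<lambda>B. measure_pmf.prob (bootstrap_samples D B)
            {ds. \<delta> < \<bar>quantile_on (RID_hat \<mu> F L lam \<epsilon> \<phi> j ds) \<phi>min \<phi>max (1/4)
                      - quantile_on (RID \<mu> F L lam \<epsilon> \<phi> j D) \<phi>min \<phi>max (1/4)\<bar>
               \<or> \<delta> < \<bar>quantile_on (RID_hat \<mu> F L lam \<epsilon> \<phi> j ds) \<phi>min \<phi>max (3/4)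
                      - quantile_on (RID \<mu> F L lam \<epsilon> \<phi> j D) \<phi>min \<phi>max (3/4)\<bar>})
          \<longlonglongrightarrow> 0)"
proof (intro allI impI)
  fix \<delta> :: real assume d: "\<delta> > 0"
  define p where "p = bootstrap_pmf D"
  define h where "h = (\<lambda>x d. rid_frac \<mu> F L lam \<epsilon> \<phi> j x d)"
  define G where "G = RID \<mu> F L lam \<epsilon> \<phi> j D"
  define Gh where "Gh = RID_hat \<mu> F L lam \<epsilon> \<phi> j"
  define P where "P = bootstrap_samples D"
  have P_eq: "P B = replicate_pmf B p" for B by (simp add: P_def p_def bootstrap_samples_def)
  have G_eq: "G x = measure_pmf.expectation p (h x)" for x by (simp add: G_def RID_def p_def h_def)
  have Gh_eq: "Gh ds x = sum_list (map (h x) ds) / real (length ds)" for ds x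
    by (simp add: Gh_def RID_hat_def h_def)
  have lohi: "\<phi>min \<le> \<phi>max" using F_ne phi_bounded by force
  have h1: "h \<phi>max d = 1" if d: "d \<in> set_pmf p" for d
  proof -
    let ?R = "rashomon F L lam \<epsilon> d"
    have "?R \<subseteq> F" by (auto simp: rashomon_def)
    then have eqN: "{f \<in> ?R. \<phi> j f d \<le> \<phi>max} = ?R" using phi_bounded by auto
    have "0 < emeasure \<mu> ?R" "emeasure \<mu> ?R < \<infinity>" using R_meas d by (auto simp: p_def)
    then have "measure \<mu> ?R \<noteq> 0"
      by (auto simp: measure_def enn2real_eq_0_iff)
    then show ?thesis by (simp add: h_def rid_frac_def eqN)
  qed
  have Ghi: "G \<phi>max = 1"
  proof -
    have "G \<phi>max = measure_pmf.expectation p (\<lambda>_. 1::real)"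
      unfolding G_eq by (rule exp_cong_supp) (simp add: h1)
    then show ?thesis by simp
  qed
  have Ghhi: "Gh ds \<phi>max = 1" if "B > 0" "ds \<in> set_pmf (P B)" for B ds
  proof -
    have len: "length ds = B" and "set ds \<subseteq> set_pmf p" using that by (auto simp: P_eq set_replicate_pmf)
    then have "map (h \<phi>max) ds = map (\<lambda>_. 1) ds" using h1 by (auto intro!: map_cong)
    then have "sum_list (map (h \<phi>max) ds) = real (length ds)" by (simp only: sum_list_triv)
    then show ?thesis using len that(1) by (simp add: Gh_eq sum_list_triv)
  qed
  have conv: "(\<lambda>B. measure_pmf.prob (P B) {ds. t \<le> \<bar>Gh ds x - G x\<bar>}) \<longlonglongrightarrow> 0" if "t > 0" for x t
    unfolding P_eq Gh_eq G_eq
    by (rule lln[OF _ that]) (simp add: h_def rid_frac_bound)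
  have smh: "\<forall>B>0. \<forall>ds\<in>set_pmf (P B). strict_mono_on {\<phi>min..\<phi>max} (Gh ds) \<and> q \<le> Gh ds \<phi>max"
    if "q \<le> 1" for q
    using RID_hat_strict Ghhi that by (auto simp: Gh_def P_def)
  have sm: "strict_mono_on {\<phi>min..\<phi>max} G" using RID_strict by (simp add: G_def)
  have l1: "(\<lambda>B. measure_pmf.prob (P B) {ds. \<delta> < \<bar>quantile_on (Gh ds) \<phi>min \<phi>max (1/4) - quantile_on G \<phi>min \<phi>max (1/4)\<bar>}) \<longlonglongrightarrow> 0"
    by (rule one_q[OF lohi sm _ smh conv d]) (simp_all add: Ghi)
  have l2: "(\<lambda>B. measure_pmf.prob (P B) {ds. \<delta> < \<bar>quantile_on (Gh ds) \<phi>min \<phi>max (3/4) - quantile_on G \<phi>min \<phi>max (3/4)\<bar>}) \<longlonglongrightarrow> 0"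
    by (rule one_q[OF lohi sm _ smh conv d]) (simp_all add: Ghi)
  let ?E1 = "\<lambda>B. {ds. \<delta> < \<bar>quantile_on (Gh ds) \<phi>min \<phi>max (1/4) - quantile_on G \<phi>min \<phi>max (1/4)\<bar>}"
  let ?E2 = "\<lambda>B. {ds. \<delta> < \<bar>quantile_on (Gh ds) \<phi>min \<phi>max (3/4) - quantile_on G \<phi>min \<phi>max (3/4)\<bar>}"
  have bnd: "measure_pmf.prob (P B) (?E1 B \<union> ?E2 B) \<le> measure_pmf.prob (P B) (?E1 B) + measure_pmf.prob (P B) (?E2 B)" for B
    by (rule measure_subadditive) auto
  have "(\<lambda>B. measure_pmf.prob (P B) (?E1 B \<union> ?E2 B)) \<longlonglongrightarrow> 0"
    by (rule tendsto_sandwich[OF _ _ tendsto_const tendsto_add_zero[OF l1 l2]])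
       (use bnd in \<open>auto intro!: always_eventually\<close>)
  then show "(\<lambda>B. measure_pmf.prob (bootstrap_samples D B)
            {ds. \<delta> < \<bar>quantile_on (RID_hat \<mu> F L lam \<epsilon> \<phi> j ds) \<phi>min \<phi>max (1/4)
                      - quantile_on (RID \<mu> F L lam \<epsilon> \<phi> j D) \<phi>min \<phi>max (1/4)\<bar>
               \<or> \<delta> < \<bar>quantile_on (RID_hat \<mu> F L lam \<epsilon> \<phi> j ds) \<phi>min \<phi>max (3/4)
                      - quantile_on (RID \<mu> F L lam \<epsilon> \<phi> j D) \<phi>min \<phi>max (3/4)\<bar>}) \<longlonglongrightarrow> 0"
    by (simp add: P_def Gh_def G_def Collect_disj_eq)
qed


end
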